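(* Let $\mathcal H=(V,E)$ be a hypergraph with splitting functions and let $R\subseteq V$ satisfy $0<\mathrm{vol}(R)\le\mathrm{vol}(\bar R)$. Let $\varepsilon_0=\mathrm{vol}(R)/\mathrm{vol}(\bar R)$, let $\varepsilon\in[\varepsilon_0,\varepsilon_0+1)$, and set $\mu=\varepsilon-\varepsilon_0\ge0$. Let $S^*$ be a minimizer of $\mathrm{HLC}$ over all subsets of $V$; this is the set returned by Algorithm 1. Let $T\subseteq V$ satisfy $0<\mathrm{vol}(T)\le\mathrm{vol}(\bar T)$, and suppose that for some $\beta\in\left(\frac{2\mu}{1+2\mu},1\right)$, $$\frac{\mathrm{vol}(T\cap R)}{\mathrm{vol}(T)}\ge\frac{\mathrm{vol}(\bar T\cap R)}{\mathrm{vol}(\bar T)}+\beta.$$ Then $$\mathrm{ncut}(S^* )\le\frac{1}{\beta+2\mu\beta-2\mu}\,\mathrm{ncut}(T).$$ In particular, when $\varepsilon=\varepsilon_0$ we get $\mathrm{ncut}(S^* )\le\frac1\beta\mathrm{ncut}(T)$.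
   Context: A hypergraph $\mathcal H=(V,E)$ has a finite node set $V$, and each hyperedge $e\in E$ is a subset of $V$. Each hyperedge $e$ carries a splitting function $w_e:2^e\to\mathbb R_{\ge0}$ satisfying $w_e(A)=w_e(e\setminus A)$ for all $A\subseteq e$ and $w_e(\emptyset)=w_e(e)=0$. For $S\subseteq V$, $\mathrm{cut}_{\mathcal H}(S)=\sum_{e\in E}w_e(e\cap S)$. The degree of $v$ is $d_v=\sum_{e\ni v}w_e(\{v\})$, and $\mathrm{vol}(S)=\sum_{v\in S}d_v$. Write $\bar S=V\setminus S$. Hypergraph normalized cut is $\mathrm{ncut}(S)=\frac{\mathrm{cut}_{\mathcal H}(S)}{\mathrm{vol}(S)}+\frac{\mathrm{cut}_{\mathcal H}(\bar S)}{\mathrm{vol}(\bar S)}$. Define $\Omega_{R,\varepsilon}(S)=\mathrm{vol}(S\cap R)-\varepsilon\,\mathrm{vol}(S\cap\bar R)$. Set $\mathrm{HLC}(S)=\mathrm{cut}_{\mathcal H}(S)/\Omega_{R,\varepsilon}(S)$ if $\Omega_{R,\varepsilon}(S)>0$, and $\mathrm{HLC}(S)=\infty$ otherwise. *)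

theory Defs
  imports "HOL-Library.Extended_Real"
begin

definition hypergraph :: "'a set \<Rightarrow> 'a set set \<Rightarrow> ('a set \<Rightarrow> 'a set \<Rightarrow> real) \<Rightarrow> bool" where
  "hypergraph V E w \<longleftrightarrow> finite V \<and> finite E \<and> (\<forall>e\<in>E. e \<subseteq> V) \<and>
     (\<forall>e\<in>E. \<forall>A. A \<subseteq> e \<longrightarrow> w e A \<ge> 0 \<and> w e A = w e (e - A)) \<and>
     (\<forall>e\<in>E. w e {} = 0 \<and> w e e = 0)"

definition hcut :: "'a set set \<Rightarrow> ('a set \<Rightarrow> 'a set \<Rightarrow> real) \<Rightarrow> 'a set \<Rightarrow> real" where
  "hcut E w S = (\<Sum>e\<in>E. w e (e \<inter> S))"

definition hdeg :: "'a set set \<Rightarrow> ('a set \<Rightarrow> 'a set \<Rightarrow> real) \<Rightarrow> 'a \<Rightarrow> real" where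
  "hdeg E w v = (\<Sum>e\<in>{e\<in>E. v \<in> e}. w e {v})"

definition hvol :: "'a set set \<Rightarrow> ('a set \<Rightarrow> 'a set \<Rightarrow> real) \<Rightarrow> 'a set \<Rightarrow> real" where
  "hvol E w S = (\<Sum>v\<in>S. hdeg E w v)"

definition ncut :: "'a set \<Rightarrow> 'a set set \<Rightarrow> ('a set \<Rightarrow> 'a set \<Rightarrow> real) \<Rightarrow> 'a set \<Rightarrow> real" where
  "ncut V E w S = hcut E w S / hvol E w S + hcut E w (V - S) / hvol E w (V - S)"

definition Omega :: "'a set \<Rightarrow> 'a set set \<Rightarrow> ('a set \<Rightarrow> 'a set \<Rightarrow> real) \<Rightarrow> 'a set \<Rightarrow> real \<Rightarrow> 'a set \<Rightarrow> real" where
  "Omega V E w R \<epsilon> S = hvol E w (S \<inter> R) - \<epsilon> * hvol E w (S \<inter> (V - R))"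

definition HLC :: "'a set \<Rightarrow> 'a set set \<Rightarrow> ('a set \<Rightarrow> 'a set \<Rightarrow> real) \<Rightarrow> 'a set \<Rightarrow> real \<Rightarrow> 'a set \<Rightarrow> ereal" where
  "HLC V E w R \<epsilon> S = (if Omega V E w R \<epsilon> S > 0
      then ereal (hcut E w S / Omega V E w R \<epsilon> S) else \<infinity>)"

end

theory Submission imports Defs begin

lemma T_side:
  fixes a b c d eps beta :: real
  assumes nn: "a \<ge> 0" "b \<ge> 0" "c \<ge> 0" "d \<ge> 0"
    and r: "a + c > 0" "a + c \<le> b + d"
    and e: "(a+c)/(b+d) \<le> eps"
    and bet: "beta < 1"
    and vT: "a + b > 0" "a + b \<le> c + d"
    and sep: "a/(a+b) \<ge> c/(c+d) + beta"
  shows "a - eps * b \<ge> (beta + 2*(eps - (a+c)/(b+d))*beta - 2*(eps - (a+c)/(b+d))) * ((a+b)*(c+d)) / (b+d)"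
proof -
  define mu where "mu = eps - (a+c)/(b+d)"
  have N: "b + d > 0" using r by linarith
  have mu0: "mu \<ge> 0" using e mu_def by simp
  have cd: "c + d > 0" using vT by linarith
  have epsN: "eps * (b+d) = a + c + mu * (b+d)" using N by (simp add: mu_def field_simps)
  have s1: "a*(c+d) \<ge> c*(a+b) + beta*(a+b)*(c+d)"
  proof -
    have "a/(a+b) * ((a+b)*(c+d)) \<ge> (c/(c+d) + beta) * ((a+b)*(c+d))"
      using sep vT cd by (intro mult_right_mono) auto
    moreover have "a/(a+b) * ((a+b)*(c+d)) = a*(c+d)" using vT by simp
    moreover have "(c/(c+d) + beta) * ((a+b)*(c+d)) = c*(a+b) + beta*(a+b)*(c+d)"
      using cd by (simp add: field_simps)
    ultimately show ?thesis by simp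
  qed
  have ab: "beta*(a+b) \<le> a"
  proof -
    have "c/(c+d) \<ge> 0" using nn cd by simp
    hence "beta \<le> a/(a+b)" using sep by linarith
    thus ?thesis using vT by (simp add: field_simps)
  qed
  have bb: "b \<le> (1-beta)*(a+b)" using ab by (simp add: algebra_simps)
  have Nle: "b + d \<le> 2*(c+d)" using vT nn by (simp add: algebra_simps)
  have m1: "mu*b*(b+d) \<le> mu*((1-beta)*(a+b))*(2*(c+d))"
    using mu0 bb Nle nn N by (intro mult_mono mult_left_mono) auto
  have key: "(a - eps*b)*(b+d) \<ge> (beta + 2*mu*beta - 2*mu) * ((a+b)*(c+d))"
  proof -
    have "(a - eps*b)*(b+d) = a*(b+d) - b*(eps*(b+d))" by (simp add: algebra_simps)
    also have "\<dots> = a*d - b*c - mu*b*(b+d)" unfolding epsN by (simp add: algebra_simps)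
    finally have "(a - eps*b)*(b+d) = a*d - b*c - mu*b*(b+d)" .
    moreover have "a*d - b*c \<ge> beta*(a+b)*(c+d)" using s1 by (simp add: algebra_simps)
    ultimately show ?thesis using m1 by (simp add: algebra_simps)
  qed
  show ?thesis using key N unfolding mu_def[symmetric] by (simp add: field_simps)
qed

lemma S_side:
  fixes a b c d eps :: real
  assumes nn: "a \<ge> 0" "b \<ge> 0" "c \<ge> 0" "d \<ge> 0"
    and N: "b + d > 0"
    and e: "(a+c)/(b+d) \<le> eps"
  shows "a - eps * b \<le> (a+b)*(c+d) / (b+d)"
proof -
  have "(a+c)/(b+d) * b \<le> eps * b" using e nn by (intro mult_right_mono) auto
  hence "(a+c)*b \<le> eps*b*(b+d)" using N by (simp add: field_simps)
  hence "(a - eps*b)*(b+d) \<le> a*(b+d) - (a+c)*b" by (simp add: algebra_simps)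
  also have "\<dots> \<le> (a+b)*(c+d)" using nn by (simp add: algebra_simps add_nonneg_nonneg mult_nonneg_nonneg)
  finally show ?thesis using N by (simp add: field_simps)
qed

lemma hg_nonneg: "hypergraph V E w \<Longrightarrow> e \<in> E \<Longrightarrow> A \<subseteq> e \<Longrightarrow> w e A \<ge> 0"
  unfolding hypergraph_def by blast

lemma hg_sym: "hypergraph V E w \<Longrightarrow> e \<in> E \<Longrightarrow> A \<subseteq> e \<Longrightarrow> w e A = w e (e - A)"
  unfolding hypergraph_def by blast

lemma hg_sub: "hypergraph V E w \<Longrightarrow> e \<in> E \<Longrightarrow> e \<subseteq> V"
  unfolding hypergraph_def by blast

lemma deg_nonneg: "hypergraph V E w \<Longrightarrow> hdeg E w v \<ge> 0"
  unfolding hdeg_def by (intro sum_nonneg) (auto intro: hg_nonneg)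

lemma vol_nonneg: "hypergraph V E w \<Longrightarrow> hvol E w X \<ge> 0"
  unfolding hvol_def using deg_nonneg by (metis sum_nonneg)

lemma cut_nonneg: "hypergraph V E w \<Longrightarrow> hcut E w X \<ge> 0"
  unfolding hcut_def by (intro sum_nonneg) (auto intro: hg_nonneg)

lemma cut_compl: assumes "hypergraph V E w" shows "hcut E w (V - S) = hcut E w S"
  unfolding hcut_def
proof (rule sum.cong[OF refl])
  fix e assume e: "e \<in> E"
  with assms have "e \<subseteq> V" by (rule hg_sub)
  hence "e \<inter> (V - S) = e - (e \<inter> S)" by auto
  moreover have "w e (e \<inter> S) = w e (e - (e \<inter> S))" using assms e by (intro hg_sym) auto
  ultimately show "w e (e \<inter> (V - S)) = w e (e \<inter> S)" by simp
qed

lemma vol_split: "finite X \<Longrightarrow> hvol E w X = hvol E w (X \<inter> Y) + hvol E w (X - Y)"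
  unfolding hvol_def by (rule sum.Int_Diff)

lemma quad:
  assumes V: "finite V" and X: "X \<subseteq> V" and R: "R \<subseteq> V"
  shows "hvol E w X = hvol E w (X \<inter> R) + hvol E w (X \<inter> (V - R))"
    and "hvol E w (V - X) = hvol E w ((V - X) \<inter> R) + hvol E w ((V - X) \<inter> (V - R))"
    and "hvol E w R = hvol E w (X \<inter> R) + hvol E w ((V - X) \<inter> R)"
    and "hvol E w (V - R) = hvol E w (X \<inter> (V - R)) + hvol E w ((V - X) \<inter> (V - R))"
proof -
  have fX: "finite X" using V X finite_subset by blast
  have fR: "finite R" using V R finite_subset by blast
  show "hvol E w X = hvol E w (X \<inter> R) + hvol E w (X \<inter> (V - R))"
  proof -
    have "X - R = X \<inter> (V - R)" using X by auto
    thus ?thesis using vol_split[OF fX, of E w R] by simp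
  qed
  show "hvol E w (V - X) = hvol E w ((V - X) \<inter> R) + hvol E w ((V - X) \<inter> (V - R))"
  proof -
    have "(V - X) - R = (V - X) \<inter> (V - R)" by auto
    thus ?thesis using vol_split[of "V - X" E w R] V by simp
  qed
  show "hvol E w R = hvol E w (X \<inter> R) + hvol E w ((V - X) \<inter> R)"
  proof -
    have "R - X = (V - X) \<inter> R" using R by auto
    moreover have "R \<inter> X = X \<inter> R" by auto
    ultimately show ?thesis using vol_split[OF fR, of E w X] by simp
  qed
  show "hvol E w (V - R) = hvol E w (X \<inter> (V - R)) + hvol E w ((V - X) \<inter> (V - R))"
  proof -
    have "(V - R) - X = (V - X) \<inter> (V - R)" by auto
    moreover have "(V - R) \<inter> X = X \<inter> (V - R)" by auto
    ultimately show ?thesis using vol_split[of "V - R" E w X] V by simp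
  qed
qed

theorem theorem5:
  fixes V :: "'a set" and E :: "'a set set" and w :: "'a set \<Rightarrow> 'a set \<Rightarrow> real"
    and R T S :: "'a set" and \<epsilon> \<beta> :: real
  assumes H: "hypergraph V E w"
    and R: "R \<subseteq> V" "0 < hvol E w R" "hvol E w R \<le> hvol E w (V - R)"
    and eps: "hvol E w R / hvol E w (V - R) \<le> \<epsilon>" "\<epsilon> < hvol E w R / hvol E w (V - R) + 1"
    and Smin: "S \<subseteq> V" "\<forall>S'. S' \<subseteq> V \<longrightarrow> HLC V E w R \<epsilon> S \<le> HLC V E w R \<epsilon> S'"
    and T: "T \<subseteq> V" "0 < hvol E w T" "hvol E w T \<le> hvol E w (V - T)"
    and beta: "2 * (\<epsilon> - hvol E w R / hvol E w (V - R)) / (1 + 2 * (\<epsilon> - hvol E w R / hvol E w (V - R))) < \<beta>" "\<beta> < 1"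
    and sep: "hvol E w (T \<inter> R) / hvol E w T \<ge> hvol E w ((V - T) \<inter> R) / hvol E w (V - T) + \<beta>"
  shows "ncut V E w S \<le> (1 / (\<beta> + 2 * (\<epsilon> - hvol E w R / hvol E w (V - R)) * \<beta>
                                 - 2 * (\<epsilon> - hvol E w R / hvol E w (V - R)))) * ncut V E w T
     \<and> (\<epsilon> = hvol E w R / hvol E w (V - R) \<longrightarrow> ncut V E w S \<le> (1 / \<beta>) * ncut V E w T)"
proof -
  let ?v = "hvol E w"
  define e0 where "e0 = ?v R / ?v (V - R)"
  define k where "k = \<beta> + 2 * (\<epsilon> - e0) * \<beta> - 2 * (\<epsilon> - e0)"
  have fV: "finite V" using H unfolding hypergraph_def by blast
  note nn = vol_nonneg[OF H]
  have N: "?v (V - R) > 0" using R by linarith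
  define a where "a = ?v (T \<inter> R)"
  define b where "b = ?v (T \<inter> (V - R))"
  define c where "c = ?v ((V - T) \<inter> R)"
  define d where "d = ?v ((V - T) \<inter> (V - R))"
  note qT = quad[OF fV T(1) R(1), of E w, folded a_def b_def c_def d_def]
  have e0': "e0 = (a+c)/(b+d)" using qT e0_def by simp
  have mu0: "\<epsilon> - e0 \<ge> 0" using eps e0_def by simp
  have kpos: "k > 0"
  proof -
    have "0 < 1 + 2 * (\<epsilon> - e0)" using mu0 by simp
    hence "2 * (\<epsilon> - e0) < \<beta> * (1 + 2 * (\<epsilon> - e0))" using beta(1) unfolding e0_def[symmetric]
      by (simp add: divide_less_eq mult.commute)
    thus ?thesis unfolding k_def by (simp add: algebra_simps)
  qed
  have OmT_eq: "Omega V E w R \<epsilon> T = a - \<epsilon>*b" unfolding Omega_def a_def b_def ..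
  have sep': "c/(c+d) + \<beta> \<le> a/(a+b)" using sep[folded a_def c_def] qT by simp
  have T1: "(\<beta> + 2*(\<epsilon> - (a+c)/(b+d))*\<beta> - 2*(\<epsilon> - (a+c)/(b+d))) * ((a+b)*(c+d))/(b+d) \<le> a - \<epsilon>*b"
    apply (rule T_side)
    using nn qT T R eps(1) beta(2) sep' by (auto simp: a_def b_def c_def d_def)
  have OT: "Omega V E w R \<epsilon> T \<ge> k * (?v T * ?v (V - T)) / ?v (V - R)"
    using T1 OmT_eq qT e0' unfolding k_def by simp
  have vTc: "?v (V - T) > 0" using T by linarith
  have OTpos: "Omega V E w R \<epsilon> T > 0"
    using OT kpos T(2) vTc N by (smt (verit) divide_pos_pos mult_pos_pos)
  have HT: "HLC V E w R \<epsilon> T = ereal (hcut E w T / Omega V E w R \<epsilon> T)"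
    using OTpos unfolding HLC_def by simp
  have HST: "HLC V E w R \<epsilon> S \<le> HLC V E w R \<epsilon> T" using Smin(2) T(1) by blast
  have OSpos: "Omega V E w R \<epsilon> S > 0"
  proof (rule ccontr)
    assume "\<not> ?thesis"
    hence "HLC V E w R \<epsilon> S = \<infinity>" unfolding HLC_def by simp
    thus False using HST HT by simp
  qed
  have CST: "hcut E w S / Omega V E w R \<epsilon> S \<le> hcut E w T / Omega V E w R \<epsilon> T"
    using HST HT OSpos unfolding HLC_def by simp
  define a' where "a' = ?v (S \<inter> R)"
  define b' where "b' = ?v (S \<inter> (V - R))"
  define c' where "c' = ?v ((V - S) \<inter> R)"
  define d' where "d' = ?v ((V - S) \<inter> (V - R))"
  note qS = quad[OF fV Smin(1) R(1), of E w, folded a'_def b'_def c'_def d'_def]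
  have OmS_eq: "Omega V E w R \<epsilon> S = a' - \<epsilon>*b'" unfolding Omega_def a'_def b'_def ..
  have S1: "a' - \<epsilon>*b' \<le> (a'+b')*(c'+d')/(b'+d')"
    apply (rule S_side)
    using nn qS N eps(1) unfolding e0_def by (auto simp: a'_def b'_def c'_def d'_def)
  have OS: "Omega V E w R \<epsilon> S \<le> (?v S * ?v (V - S)) / ?v (V - R)"
    using S1 OmS_eq qS by simp
  have OS': "?v (V - R) * Omega V E w R \<epsilon> S \<le> ?v S * ?v (V - S)"
    using OS N by (simp add: field_simps)
  have prodS: "?v S * ?v (V - S) > 0"
    using OS' OSpos N by (smt (verit) mult_pos_pos)
  have vS: "?v S > 0" "?v (V - S) > 0"
    using prodS nn[of S] nn[of "V - S"]
    by (metis less_eq_real_def mult_zero_left mult_zero_right)+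
  define M where "M = ?v R + ?v (V - R)"
  have MS: "?v S + ?v (V - S) = M" unfolding M_def using qS by simp
  have MT: "?v T + ?v (V - T) = M" unfolding M_def using qT by simp
  have Mpos: "M > 0" using MS vS by linarith
  define cS where "cS = hcut E w S"
  define cT where "cT = hcut E w T"
  have cS0: "cS \<ge> 0" "cT \<ge> 0" unfolding cS_def cT_def using cut_nonneg[OF H] by auto
  have ncS: "ncut V E w S = cS * M / (?v S * ?v (V - S))"
    unfolding ncut_def cut_compl[OF H] cS_def[symmetric] using vS
    by (simp add: field_simps MS[symmetric])
  have ncT: "ncut V E w T = cT * M / (?v T * ?v (V - T))"
    unfolding ncut_def cut_compl[OF H] cT_def[symmetric] using vTc T(2)
    by (simp add: field_simps MT[symmetric])
  define OmS where "OmS = Omega V E w R \<epsilon> S"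
  define OmT where "OmT = Omega V E w R \<epsilon> T"
  define NN where "NN = ?v (V - R)"
  define P where "P = ?v S * ?v (V - S)"
  define Q where "Q = ?v T * ?v (V - T)"
  have Qpos: "Q > 0" unfolding Q_def using vTc T(2) by simp
  have step1: "cS * M / P \<le> cS * M / (NN * OmS)"
    using OS' OSpos N cS0 Mpos prodS vS unfolding P_def NN_def OmS_def
    by (intro divide_left_mono mult_nonneg_nonneg mult_pos_pos) auto
  have step2: "cS * M / (NN * OmS) = (M / NN) * (cS / OmS)" by simp
  have step3: "(M / NN) * (cS / OmS) \<le> (M / NN) * (cT / OmT)"
    using CST Mpos N unfolding cS_def cT_def OmS_def OmT_def NN_def
    by (intro mult_left_mono) auto
  have OT': "k * Q \<le> NN * OmT" using OT N unfolding Q_def NN_def OmT_def by (simp add: field_simps)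
  have step4: "cT / OmT \<le> cT / (k * Q / NN)"
    using OT' OTpos N kpos Qpos cS0 unfolding OmT_def NN_def
    by (intro divide_left_mono) (auto simp: field_simps)
  have step5: "(M / NN) * (cT / OmT) \<le> (M / NN) * (cT / (k * Q / NN))"
    using step4 Mpos N unfolding NN_def by (intro mult_left_mono) auto
  have step6: "(M / NN) * (cT / (k * Q / NN)) = (1 / k) * (cT * M / Q)"
    using N kpos Qpos unfolding NN_def by (simp add: field_simps)
  have main: "ncut V E w S \<le> (1 / k) * ncut V E w T"
  proof -
    have "ncut V E w S = cS * M / P" using ncS unfolding P_def .
    also note step1
    also note step2
    also note step3
    also note step5
    also note step6
    also have "(1 / k) * (cT * M / Q) = (1 / k) * ncut V E w T" using ncT unfolding Q_def by simp
    finally show ?thesis .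
  qed
  show ?thesis
  proof
    show "ncut V E w S \<le> (1 / (\<beta> + 2 * (\<epsilon> - hvol E w R / hvol E w (V - R)) * \<beta>
                                 - 2 * (\<epsilon> - hvol E w R / hvol E w (V - R)))) * ncut V E w T"
      using main unfolding k_def e0_def .
    show "\<epsilon> = hvol E w R / hvol E w (V - R) \<longrightarrow> ncut V E w S \<le> (1 / \<beta>) * ncut V E w T"
    proof
      assume h: "\<epsilon> = hvol E w R / hvol E w (V - R)"
      have "k = \<beta>" unfolding k_def e0_def h by simp
      thus "ncut V E w S \<le> (1 / \<beta>) * ncut V E w T" using main by simp
    qed
  qed
qed

end
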